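(* Let $k$ be a field, $n\ge 2$, and let $Q$ be the $n$-Kronecker quiver. Let $\mathcal F=\{(x,y)\in\mathbb N^2 : \tfrac{1}{n-1}x<y\le (n-1)x\}$. For every $(x,y)\in\mathcal F$ there are at least $n$ isomorphism classes of cover-thin $kQ$-modules $N$ with dimension vector $(x,y)$.
   Context: The $n$-Kronecker quiver $Q$ has two vertices, a source $1$ and a sink $2$, and $n$ arrows $\alpha_1,\dots,\alpha_n\colon 1\to 2$; a finite-dimensional $kQ$-module $N$ is a representation with spaces $N_1,N_2$ and maps $N_{\alpha_i}\colon N_1\to N_2$, with dimension vector $(\dim N_1,\dim N_2)$. The universal covering $\widetilde Q$ of $Q$ is the $n$-regular tree (every vertex has exactly $n$ neighbours) with bipartite orientation (every vertex is a sink or a source), together with the covering map to $Q$ sending sources to $1$, sinks to $2$, and labelling each arrow by some $\alpha_i$ such that at every vertex the $n$ incident arrows carry the $n$ distinct labels $\alpha_1,\dots,\alpha_n$. The push-down functor $\pi\colon \operatorname{mod}k\widetilde Q\to\operatorname{mod}kQ$ sends a finite-dimensional representation $M$ of $\widetilde Q$ to the $kQ$-module with $\pi(M)_1=\bigoplus_{v\text{ source}}M_v$, $\pi(M)_2=\bigoplus_{v\text{ sink}}M_v$, and $\pi(M)_{\alpha_i}$ the sum of the maps $M_\beta$ over all arrows $\beta$ of $\widetilde Q$ labelled $\alpha_i$. An indecomposable representation is thin if each of its vector spaces has dimension $0$ or $1$. A $kQ$-module is cover-thin if it is isomorphic to $\pi(M)$ for some thin indecomposable representation $M$ of $\widetilde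 Q$. Here $\mathbb N$ denotes the positive integers. *)

theory Defs
  imports Complex_Main "Jordan_Normal_Form.Matrix"
begin

text \<open>A kQ-module N is encoded (up to choice of bases) as (a, b, A) with
  N_1 = k^a, N_2 = k^b and N_{alpha_(i+1)} = A i, a b x a matrix, for i < n
  (the arrows alpha_1..alpha_n are indexed 0..n-1).\<close>

type_synonym 'k kmod = "nat \<times> nat \<times> (nat \<Rightarrow> 'k mat)"

definition kmod_valid :: "nat \<Rightarrow> 'k kmod \<Rightarrow> bool" where
  "kmod_valid n N = (case N of (a, b, A) \<Rightarrow> \<forall>i<n. A i \<in> carrier_mat b a)"

definition dimvec :: "'k kmod \<Rightarrow> nat \<times> nat" where
  "dimvec N = (case N of (a, b, A) \<Rightarrow> (a, b))"

definition kmod_iso :: "nat \<Rightarrow> 'k::field kmod \<Rightarrow> 'k kmod \<Rightarrow> bool" where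
  "kmod_iso n N N' = (case N of (a, b, A) \<Rightarrow> case N' of (a', b', A') \<Rightarrow>
     a = a' \<and> b = b' \<and>
     (\<exists>P R. P \<in> carrier_mat a a \<and> R \<in> carrier_mat b b \<and>
        invertible_mat P \<and> invertible_mat R \<and>
        (\<forall>i<n. R * A i = A' i * P)))"

text \<open>Vertices are reduced words over the labels {0..n-1} (no two consecutive
  equal letters), i.e. elements of the free product of n copies of Z/2.  The
  edge labelled i joins w and tstep w i.  Words of even length are sources
  (mapped to vertex 1), words of odd length are sinks (mapped to vertex 2);
  every arrow goes from a source u to tstep u i and is labelled alpha_(i+1).
  Each vertex has exactly n incident arrows, carrying the n distinct labels.\<close>

definition tree_vertex :: "nat \<Rightarrow> nat list \<Rightarrow> bool" where
  "tree_vertex n w = ((\<forall>x\<in>set w. x < n) \<and> (\<forall>j. Suc j < length w \<longrightarrow> w ! j \<noteq> w ! Suc j))"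

definition tstep :: "nat list \<Rightarrow> nat \<Rightarrow> nat list" where
  "tstep w i = (if w \<noteq> [] \<and> last w = i then butlast w else w @ [i])"

definition is_source :: "nat list \<Rightarrow> bool" where
  "is_source w = even (length w)"

text \<open>A thin representation M is given by its (finite) support S: M_v = k for
  v in S and M_v = 0 otherwise; and scalars lam u i: the map of the arrow from
  the source u with label i is multiplication by lam u i (the map is zero when
  one of its endpoints lies outside the support).\<close>

definition thin_space :: "nat list set \<Rightarrow> nat list \<Rightarrow> 'k::field set" where
  "thin_space S v = (if v \<in> S then UNIV else {0})"

definition thin_map :: "nat list set \<Rightarrow> (nat list \<Rightarrow> nat \<Rightarrow> 'k::field) \<Rightarrow> nat list \<Rightarrow> nat \<Rightarrow> 'k \<Rightarrow> 'k" where
  "thin_map S lam u i x = (if u \<in> S \<and> tstep u i \<in> S then lam u i * x else 0)"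

definition thin_subrep :: "nat \<Rightarrow> nat list set \<Rightarrow> (nat list \<Rightarrow> nat \<Rightarrow> 'k::field)
    \<Rightarrow> (nat list \<Rightarrow> 'k set) \<Rightarrow> bool" where
  "thin_subrep n S lam U =
     ((\<forall>v. U v \<subseteq> thin_space S v \<and> 0 \<in> U v \<and>
           (\<forall>x\<in>U v. \<forall>y\<in>U v. x + y \<in> U v) \<and> (\<forall>c. \<forall>x\<in>U v. c * x \<in> U v)) \<and>
      (\<forall>u i x. tree_vertex n u \<and> is_source u \<and> i < n \<and> x \<in> U u \<longrightarrow>
           thin_map S lam u i x \<in> U (tstep u i)))"

definition thin_decomposable :: "nat \<Rightarrow> nat list set \<Rightarrow> (nat list \<Rightarrow> nat \<Rightarrow> 'k::field) \<Rightarrow> bool" where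
  "thin_decomposable n S lam =
     (\<exists>U W. thin_subrep n S lam U \<and> thin_subrep n S lam W \<and>
        (\<exists>v. U v \<noteq> {0}) \<and> (\<exists>v. W v \<noteq> {0}) \<and>
        (\<forall>v. U v \<inter> W v = {0} \<and> {p + q | p q. p \<in> U v \<and> q \<in> W v} = thin_space S v))"

definition thin_indec :: "nat \<Rightarrow> nat list set \<Rightarrow> (nat list \<Rightarrow> nat \<Rightarrow> 'k::field) \<Rightarrow> bool" where
  "thin_indec n S lam =
     (finite S \<and> (\<forall>v\<in>S. tree_vertex n v) \<and> S \<noteq> {} \<and> \<not> thin_decomposable n S lam)"

text \<open>Matrix of pi(M)_{alpha_(i+1)} with respect to bases of
  pi(M)_1 = direct sum of M_u (u source in S), enumerated by e1, and
  pi(M)_2 = direct sum of M_w (w sink in S), enumerated by e2.\<close>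
definition pushdown :: "nat \<Rightarrow> nat list set \<Rightarrow> (nat list \<Rightarrow> nat \<Rightarrow> 'k::field)
    \<Rightarrow> (nat \<Rightarrow> nat list) \<Rightarrow> (nat \<Rightarrow> nat list) \<Rightarrow> 'k kmod" where
  "pushdown n S lam e1 e2 =
     (let a = card {u\<in>S. is_source u}; b = card {w\<in>S. \<not> is_source w} in
      (a, b, \<lambda>i. mat b a (\<lambda>(r, c). if e2 r = tstep (e1 c) i then thin_map S lam (e1 c) i 1 else 0)))"

definition cover_thin :: "nat \<Rightarrow> 'k::field kmod \<Rightarrow> bool" where
  "cover_thin n N =
     (kmod_valid n N \<and>
      (\<exists>S lam e1 e2. thin_indec n S lam \<and>
         bij_betw e1 {..<card {u\<in>S. is_source u}} {u\<in>S. is_source u} \<and>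
         bij_betw e2 {..<card {w\<in>S. \<not> is_source w}} {w\<in>S. \<not> is_source w} \<and>
         kmod_iso n N (pushdown n S lam e1 e2)))"

end

theory Submission
  imports Defs
begin
definition inj_mat :: "'a::field mat \<Rightarrow> bool" where
  "inj_mat M = (\<forall>v \<in> carrier_vec (dim_col M). M *\<^sub>v v = 0\<^sub>v (dim_row M) \<longrightarrow> v = 0\<^sub>v (dim_col M))"

lemma mult_zero_vec_right: "(M::'a::field mat) \<in> carrier_mat b a \<Longrightarrow> M *\<^sub>v 0\<^sub>v a = 0\<^sub>v b"
  by (intro eq_vecI) auto

lemma assoc_mv: "A \<in> carrier_mat n1 n2 \<Longrightarrow> B \<in> carrier_mat n2 n3 \<Longrightarrow> v \<in> carrier_vec n3
  \<Longrightarrow> A *\<^sub>v (B *\<^sub>v v) = (A * B) *\<^sub>v v"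
  by (rule assoc_mult_mat_vec[symmetric])

lemma inj_transfer1:
  fixes A :: "'a::field mat"
  assumes A: "A \<in> carrier_mat b a" "A' \<in> carrier_mat b a"
    and R: "R \<in> carrier_mat b b" and P: "P \<in> carrier_mat a a" "Qi \<in> carrier_mat a a"
    and QiP: "Qi * P = 1\<^sub>m a" and eq: "R * A = A' * P" and inj: "inj_mat A'"
  shows "inj_mat A"
  unfolding inj_mat_def
proof (intro ballI impI)
  fix v assume v: "v \<in> carrier_vec (dim_col A)" and z: "A *\<^sub>v v = 0\<^sub>v (dim_row A)"
  have va: "v \<in> carrier_vec a" using v A by auto
  have "A' *\<^sub>v (P *\<^sub>v v) = (A' * P) *\<^sub>v v" using assoc_mv[OF A(2) P(1) va] .
  also have "\<dots> = (R * A) *\<^sub>v v" using eq by simp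
  also have "\<dots> = R *\<^sub>v (A *\<^sub>v v)" using assoc_mv[OF R A(1) va] by simp
  also have "\<dots> = 0\<^sub>v b" using z A R mult_zero_vec_right[OF R] by auto
  finally have "P *\<^sub>v v = 0\<^sub>v a" using inj A P va unfolding inj_mat_def by auto
  hence "Qi *\<^sub>v (P *\<^sub>v v) = 0\<^sub>v a" using mult_zero_vec_right[OF P(2)] by simp
  moreover have "Qi *\<^sub>v (P *\<^sub>v v) = (Qi * P) *\<^sub>v v" using assoc_mv[OF P(2) P(1) va] .
  moreover have "(Qi * P) *\<^sub>v v = v" using QiP va by simp
  ultimately show "v = 0\<^sub>v (dim_col A)" using A by auto
qed

lemma inj_transfer2:
  fixes A :: "'a::field mat"
  assumes A: "A \<in> carrier_mat b a" "A' \<in> carrier_mat b a"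
    and R: "R \<in> carrier_mat b b" "Ri \<in> carrier_mat b b" and P: "P \<in> carrier_mat a a" "Qi \<in> carrier_mat a a"
    and RiR: "Ri * R = 1\<^sub>m b" and PQi: "P * Qi = 1\<^sub>m a" and eq: "R * A = A' * P" and inj: "inj_mat A"
  shows "inj_mat A'"
  unfolding inj_mat_def
proof (intro ballI impI)
  fix w assume w: "w \<in> carrier_vec (dim_col A')" and z: "A' *\<^sub>v w = 0\<^sub>v (dim_row A')"
  have wa: "w \<in> carrier_vec a" using w A by auto
  have "P *\<^sub>v (Qi *\<^sub>v w) = (P * Qi) *\<^sub>v w" using assoc_mv[OF P(1) P(2) wa] .
  hence pw: "P *\<^sub>v (Qi *\<^sub>v w) = w" using PQi wa by simp
  have qw: "Qi *\<^sub>v w \<in> carrier_vec a" using P(2) wa by simp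
  have "R *\<^sub>v (A *\<^sub>v (Qi *\<^sub>v w)) = (R * A) *\<^sub>v (Qi *\<^sub>v w)" using assoc_mv[OF R(1) A(1) qw] .
  also have "\<dots> = (A' * P) *\<^sub>v (Qi *\<^sub>v w)" using eq by simp
  also have "\<dots> = A' *\<^sub>v w" using assoc_mv[OF A(2) P(1) qw] pw by simp
  also have "\<dots> = 0\<^sub>v b" using z A by auto
  finally have "Ri *\<^sub>v (R *\<^sub>v (A *\<^sub>v (Qi *\<^sub>v w))) = 0\<^sub>v b" using mult_zero_vec_right[OF R(2)] by simp
  moreover have "Ri *\<^sub>v (R *\<^sub>v (A *\<^sub>v (Qi *\<^sub>v w))) = (Ri * R) *\<^sub>v (A *\<^sub>v (Qi *\<^sub>v w))"
    using assoc_mv[OF R(2) R(1)] A(1) qw by simp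
  moreover have "(Ri * R) *\<^sub>v (A *\<^sub>v (Qi *\<^sub>v w)) = A *\<^sub>v (Qi *\<^sub>v w)"
    using RiR A P wa by simp
  ultimately have "Qi *\<^sub>v w = 0\<^sub>v a" using inj A P wa unfolding inj_mat_def by auto
  hence "w = P *\<^sub>v 0\<^sub>v a" using pw by simp
  then show "w = 0\<^sub>v (dim_col A')" using mult_zero_vec_right[OF P(1)] A by auto
qed

lemma pp_inj:
  fixes M :: "'a::field mat"
  assumes M: "M \<in> carrier_mat p q"
    and ent: "\<And>r c. r < p \<Longrightarrow> c < q \<Longrightarrow> M $$ (r,c) = (if f r = \<phi> (g c) then 1 else 0)"
    and injf: "inj_on f {..<p}" and injg: "inj_on (\<lambda>c. \<phi> (g c)) {..<q}"
    and all: "\<And>c. c < q \<Longrightarrow> \<phi> (g c) \<in> f ` {..<p}"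
  shows "inj_mat M"
  unfolding inj_mat_def
proof (intro ballI impI)
  fix v assume v: "v \<in> carrier_vec (dim_col M)" and z: "M *\<^sub>v v = 0\<^sub>v (dim_row M)"
  show "v = 0\<^sub>v (dim_col M)"
  proof (rule eq_vecI)
    show "dim_vec v = dim_vec (0\<^sub>v (dim_col M))" using v by auto
    fix c assume "c < dim_vec (0\<^sub>v (dim_col M))"
    hence c: "c < q" using M by auto
    obtain r where r: "r < p" "f r = \<phi> (g c)" using all[OF c] by auto
    have "0 = (M *\<^sub>v v) $ r" using z r M by auto
    also have "\<dots> = (\<Sum>i\<in>{0..<q}. M $$ (r,i) * v $ i)"
      using r M v by (auto simp: scalar_prod_def)
    also have "\<dots> = (\<Sum>i\<in>{0..<q}. if i = c then v $ i else 0)"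
    proof (rule sum.cong)
      fix i assume i: "i \<in> {0..<q}"
      have "(f r = \<phi> (g i)) = (i = c)" using r injg i c unfolding inj_on_def by auto
      thus "M $$ (r,i) * v $ i = (if i = c then v $ i else 0)" using ent[OF r(1)] i by auto
    qed simp
    also have "\<dots> = v $ c" using c by simp
    finally show "v $ c = 0\<^sub>v (dim_col M) $ c" using c M by auto
  qed
qed

lemma pp_noninj:
  fixes M :: "'a::field mat"
  assumes M: "M \<in> carrier_mat p q"
    and ent: "\<And>r c. r < p \<Longrightarrow> c < q \<Longrightarrow> M $$ (r,c) = (if f r = \<phi> (g c) then 1 else 0)"
    and c: "c < q" and notin: "\<phi> (g c) \<notin> f ` {..<p}"
  shows "\<not> inj_mat M"
proof
  assume inj: "inj_mat M"
  have "M *\<^sub>v unit_vec q c = 0\<^sub>v p"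
  proof (rule eq_vecI)
    fix r assume "r < dim_vec (0\<^sub>v p)"
    hence r: "r < p" by simp
    have "(M *\<^sub>v unit_vec q c) $ r = row M r $ c" using M r c by simp
    also have "\<dots> = 0" using M r c ent[OF r c] notin by (auto simp: image_iff) (metis lessThan_iff)
    finally show "(M *\<^sub>v unit_vec q c) $ r = 0\<^sub>v p $ r" using r by simp
  qed (use M in simp)
  hence "unit_vec q c = (0\<^sub>v q :: 'a vec)" using inj M unfolding inj_mat_def by auto
  thus False using unit_vec_nonzero[OF c, where 'a='a] by simp
qed


lemma tstep_length: "tree_vertex n u \<Longrightarrow> length (tstep u i) = (if u \<noteq> [] \<and> last u = i then length u - 1 else Suc (length u))"
  by (auto simp: tstep_def)

lemma tstep_source: "is_source (tstep u i) = (\<not> is_source u)"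
  by (auto simp: tstep_def is_source_def)

lemma reduced_last_butlast:
  assumes tv: "tree_vertex n v" and ne: "butlast v \<noteq> []"
  shows "last (butlast v) \<noteq> last v"
proof -
  have "length (butlast v) > 0" using ne by blast
  hence L: "length v \<ge> 2" by simp
  have "last (butlast v) = v ! (length v - Suc (Suc 0))" using ne L by (simp add: last_conv_nth nth_butlast)
  moreover have "last v = v ! Suc (length v - Suc (Suc 0))" using L by (subst last_conv_nth) (auto simp: Suc_diff_Suc)
  moreover have "Suc (length v - Suc (Suc 0)) < length v" using L by simp
  ultimately show ?thesis using tv unfolding tree_vertex_def by metis
qed

lemma tstep_invol:
  assumes tv: "tree_vertex n u"
  shows "tstep (tstep u i) i = u"
proof (cases "u \<noteq> [] \<and> last u = i")
  case True
  hence "tstep u i = butlast u" by (simp add: tstep_def)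
  moreover have "butlast u = [] \<or> last (butlast u) \<noteq> i" using reduced_last_butlast[OF tv] True by auto
  moreover have "butlast u @ [last u] = u" using True append_butlast_last_id by blast
  ultimately show ?thesis using True by (auto simp: tstep_def)
next
  case False
  thus ?thesis by (auto simp: tstep_def)
qed

lemma tstep_butlast:
  assumes tv: "tree_vertex n v" and ne: "v \<noteq> []"
  shows "tstep (butlast v) (last v) = v" "tstep v (last v) = butlast v" "last v < n"
proof -
  show "tstep (butlast v) (last v) = v"
    using reduced_last_butlast[OF tv] ne by (auto simp: tstep_def)
  show "tstep v (last v) = butlast v" using ne by (simp add: tstep_def)
  show "last v < n" using tv ne unfolding tree_vertex_def by auto
qed

lemma tree_vertex_butlast: "tree_vertex n v \<Longrightarrow> tree_vertex n (butlast v)"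
  unfolding tree_vertex_def by (auto simp: nth_butlast in_set_butlastD)

lemma one_dim_sub:
  fixes U :: "'k::field set"
  assumes "\<forall>c. \<forall>x\<in>U. c * x \<in> U" and "x \<in> U" and "x \<noteq> 0"
  shows "1 \<in> U"
proof -
  have "inverse x * x \<in> U" using assms(1) assms(2) by blast
  thus ?thesis using assms(3) by simp
qed

lemma thin_indec_rooted:
  assumes fin: "finite S" and root: "[] \<in> S" and tv: "\<forall>v\<in>S. tree_vertex n v"
    and cl: "\<forall>v\<in>S. v \<noteq> [] \<longrightarrow> butlast v \<in> S"
  shows "thin_indec n S (\<lambda>_ _. 1::'k::field)"
  unfolding thin_indec_def
proof (intro conjI)
  show "finite S" "\<forall>v\<in>S. tree_vertex n v" "S \<noteq> {}" using fin tv root by auto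
  show "\<not> thin_decomposable n S (\<lambda>_ _. 1::'k)"
  proof
    assume "thin_decomposable n S (\<lambda>_ _. 1::'k)"
    then obtain U W where U: "thin_subrep n S (\<lambda>_ _. 1::'k) U" and W: "thin_subrep n S (\<lambda>_ _. 1::'k) W"
      and Un: "\<exists>v. U v \<noteq> {0}" and Wn: "\<exists>v. W v \<noteq> {0}"
      and dec: "\<forall>v. U v \<inter> W v = {0} \<and> {p + q | p q. p \<in> U v \<and> q \<in> W v} = thin_space S v"
      unfolding thin_decomposable_def by blast
    have gen: "\<And>X v x. thin_subrep n S (\<lambda>_ _. 1::'k) X \<Longrightarrow> x \<in> X v \<Longrightarrow> x \<noteq> 0 \<Longrightarrow> 1 \<in> X v"
      unfolding thin_subrep_def by (metis one_dim_sub)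
    have z: "\<And>X v. thin_subrep n S (\<lambda>_ _. 1::'k) X \<Longrightarrow> 0 \<in> X v"
      unfolding thin_subrep_def by blast
    have sub: "\<And>X v. thin_subrep n S (\<lambda>_ _. 1::'k) X \<Longrightarrow> X v \<subseteq> thin_space S v"
      unfolding thin_subrep_def by blast
    have ex: "\<And>v. v \<in> S \<Longrightarrow> (1 \<in> U v) = (1 \<notin> W v)"
    proof -
      fix v assume v: "v \<in> S"
      have "1 \<in> thin_space S v" using v by (simp add: thin_space_def)
      hence "1 \<in> {p + q | p q. p \<in> U v \<and> q \<in> W v}" using dec by auto
      then obtain p q where pq: "p \<in> U v" "q \<in> W v" "1 = p + q" by blast
      have "p \<noteq> 0 \<or> q \<noteq> 0" using pq(3) by auto
      hence "1 \<in> U v \<or> 1 \<in> W v" using gen[OF U pq(1)] gen[OF W pq(2)] by auto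
      moreover have "\<not> (1 \<in> U v \<and> 1 \<in> W v)" using dec by (metis IntI one_neq_zero singletonD)
      ultimately show "(1 \<in> U v) = (1 \<notin> W v)" by blast
    qed
    have mp: "\<And>X u i. thin_subrep n S (\<lambda>_ _. 1::'k) X \<Longrightarrow> u \<in> S \<Longrightarrow> is_source u \<Longrightarrow> i < n
        \<Longrightarrow> tstep u i \<in> S \<Longrightarrow> 1 \<in> X u \<Longrightarrow> 1 \<in> X (tstep u i)"
    proof -
      fix X u i assume X: "thin_subrep n S (\<lambda>_ _. 1::'k) X" and u: "u \<in> S" "is_source u" "i < n"
        "tstep u i \<in> S" "1 \<in> X u"
      have "thin_map S (\<lambda>_ _. 1::'k) u i 1 \<in> X (tstep u i)"
        using X u tv unfolding thin_subrep_def by blast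
      thus "1 \<in> X (tstep u i)" using u by (simp add: thin_map_def)
    qed
    have edge: "\<And>u i. u \<in> S \<Longrightarrow> is_source u \<Longrightarrow> i < n \<Longrightarrow> tstep u i \<in> S \<Longrightarrow> (1 \<in> U u) = (1 \<in> U (tstep u i))"
    proof -
      fix u i assume u: "u \<in> S" "is_source u" "i < n" "tstep u i \<in> S"
      show "(1 \<in> U u) = (1 \<in> U (tstep u i))"
        using mp[OF U u] mp[OF W u] ex[OF u(1)] ex[OF u(4)] by blast
    qed
    have adj: "\<And>v. v \<in> S \<Longrightarrow> v \<noteq> [] \<Longrightarrow> (1 \<in> U v) = (1 \<in> U (butlast v))"
    proof -
      fix v assume v: "v \<in> S" "v \<noteq> []"
      have tvv: "tree_vertex n v" using tv v by auto
      have bS: "butlast v \<in> S" using cl v by auto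
      note tb = tstep_butlast[OF tvv v(2)]
      show "(1 \<in> U v) = (1 \<in> U (butlast v))"
      proof (cases "is_source v")
        case True
        show ?thesis using edge[OF v(1) True tb(3)] tb(2) bS by simp
      next
        case False
        have "is_source (butlast v)" using False tstep_source[of "butlast v" "last v"] tb(1) by simp
        thus ?thesis using edge[OF bS _ tb(3)] tb(1) v by simp
      qed
    qed
    have all: "\<And>v. v \<in> S \<Longrightarrow> (1 \<in> U v) = (1 \<in> U [])"
    proof -
      fix v show "v \<in> S \<Longrightarrow> (1 \<in> U v) = (1 \<in> U [])"
      proof (induction "length v" arbitrary: v)
        case 0 thus ?case by simp
      next
        case (Suc m)
        hence "v \<noteq> []" by auto
        moreover have "butlast v \<in> S" using cl Suc.prems \<open>v \<noteq> []\<close> by auto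
        moreover have "length (butlast v) = m" using Suc.hyps by simp
        ultimately show ?case using Suc.hyps(1) adj[OF Suc.prems] by metis
      qed
    qed
    have zeroX: "\<And>X. thin_subrep n S (\<lambda>_ _. 1::'k) X \<Longrightarrow> (\<forall>v\<in>S. 1 \<notin> X v) \<Longrightarrow> \<forall>v. X v = {0}"
    proof (intro allI)
      fix X v assume X: "thin_subrep n S (\<lambda>_ _. 1::'k) X" and n1: "\<forall>v\<in>S. 1 \<notin> X v"
      show "X v = {0}"
      proof (cases "v \<in> S")
        case True
        thus ?thesis using gen[OF X] n1 z[OF X] by blast
      next
        case False
        thus ?thesis using sub[OF X, of v] z[OF X, of v] by (auto simp: thin_space_def)
      qed
    qed
    show False
    proof (cases "1 \<in> U []")
      case True
      hence "\<forall>v\<in>S. 1 \<notin> W v" using all ex by blast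
      thus False using zeroX[OF W] Wn by blast
    next
      case False
      hence "\<forall>v\<in>S. 1 \<notin> U v" using all by blast
      thus False using zeroX[OF U] Un by blast
    qed
  qed
qed


locale constr =
  fixes n :: nat and lab :: "nat \<Rightarrow> nat" and z q sd :: nat
  assumes n3: "n \<ge> 3"
    and lab_inj: "inj_on lab {..<n}" and lab_rng: "\<And>c. c < n \<Longrightarrow> lab c < n"
    and z1: "z \<ge> 1" and qle: "q \<le> (n - 2) * z" and sd1: "sd \<le> 1"
begin

definition "la = lab 0"
definition "lb = lab 1"
definition letter :: "nat \<Rightarrow> nat" where "letter L = (if even L then la else lb)"
definition aw :: "nat \<Rightarrow> nat list" where "aw L = map letter [0..<L]"
definition pk :: "nat \<Rightarrow> nat" where
  "pk i = (if i = 0 then (if sd = 0 then 0 else z - 1) else (i - 1) mod z)"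
definition pc :: "nat \<Rightarrow> nat" where
  "pc i = (if i = 0 then 1 else 2 + (i - 1) div z)"
definition pend :: "nat \<Rightarrow> nat list" where
  "pend i = aw (2 * pk i + sd) @ [lab (pc i)]"
definition TS :: "nat list set" where
  "TS = aw ` {..<2*z} \<union> pend ` {..<q}"

lemma lab_eq: "c < n \<Longrightarrow> d < n \<Longrightarrow> (lab c = lab d) = (c = d)"
  using lab_inj unfolding inj_on_def by auto

lemma ab: "la \<noteq> lb" "la < n" "lb < n"
  using lab_eq[of 0 1] lab_rng[of 0] lab_rng[of 1] n3 by (auto simp: la_def lb_def)

lemma letter_lt: "letter L < n" using ab by (simp add: letter_def)

lemma letter_Suc: "letter (Suc L) \<noteq> letter L" using ab by (auto simp: letter_def)

lemma letter_Suc': "letter L \<noteq> letter (Suc L)" using letter_Suc by metis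

lemma len_aw[simp]: "length (aw L) = L" by (simp add: aw_def)

lemma aw_Suc: "aw (Suc L) = aw L @ [letter L]" by (simp add: aw_def)

lemma aw_nth: "i < L \<Longrightarrow> aw L ! i = letter i" by (simp add: aw_def)

lemma aw_inj[simp]: "(aw L = aw M) = (L = M)"
  by (metis len_aw)

lemma aw_eq_app: "(aw M = aw L @ [c]) = (M = Suc L \<and> c = letter L)"
proof
  assume h: "aw M = aw L @ [c]"
  hence "M = Suc L" by (metis len_aw length_append_singleton)
  thus "M = Suc L \<and> c = letter L" using h by (simp add: aw_Suc)
qed (simp add: aw_Suc)

lemma tv_aw: "tree_vertex n (aw L)"
  unfolding tree_vertex_def using letter_lt letter_Suc' by (auto simp: aw_def)

lemma tv_app:
  assumes c: "c < n" and ne: "L > 0 \<Longrightarrow> c \<noteq> letter (L - 1)"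
  shows "tree_vertex n (aw L @ [c])"
  unfolding tree_vertex_def
proof (intro conjI allI impI ballI)
  fix x assume "x \<in> set (aw L @ [c])"
  thus "x < n" using c letter_lt by (auto simp: aw_def)
next
  fix j assume j: "Suc j < length (aw L @ [c])"
  show "(aw L @ [c]) ! j \<noteq> (aw L @ [c]) ! Suc j"
  proof (cases "Suc j < L")
    case True
    thus ?thesis using letter_Suc[of j] by (simp add: nth_append aw_nth)
  next
    case False
    hence "Suc j = L" using j by simp
    thus ?thesis using ne by (auto simp: nth_append aw_nth)
  qed
qed

lemma tstep_aw: "tstep (aw L) l = (if L > 0 \<and> letter (L - 1) = l then aw (L - 1) else aw L @ [l])"
proof (cases L)
  case 0 thus ?thesis by (simp add: tstep_def aw_def)
next
  case (Suc M)
  thus ?thesis by (simp add: tstep_def aw_Suc)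
qed

lemma pk_lt: "pk i < z" using z1 by (auto simp: pk_def)

lemma pc_ge: "pc i \<ge> 1" by (simp add: pc_def)

lemma pc_one: "(pc i = 1) = (i = 0)" by (simp add: pc_def)

lemma pc_lt: assumes "i < q" shows "pc i < n"
proof (cases "i = 0")
  case True thus ?thesis using n3 by (simp add: pc_def)
next
  case False
  have "i - 1 < (n - 2) * z" using assms qle False by simp
  hence "(i - 1) div z < n - 2" by (simp add: less_mult_imp_div_less)
  thus ?thesis using False n3 by (simp add: pc_def)
qed

lemma pc_pk_inj: assumes "i < q" "i' < q" "pk i = pk i'" "pc i = pc i'" shows "i = i'"
proof (cases "i = 0 \<or> i' = 0")
  case True thus ?thesis using assms(4) pc_one by metis
next
  case False
  hence "(i - 1) mod z = (i' - 1) mod z" "(i - 1) div z = (i' - 1) div z"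
    using assms by (auto simp: pk_def pc_def)
  hence "i - 1 = i' - 1" by (metis div_mult_mod_eq)
  thus ?thesis using False by arith
qed

lemma pend_letter: assumes "i < q" and nz: "sd = 0 \<or> i \<noteq> 0" shows "lab (pc i) \<noteq> letter (2 * pk i + sd)"
proof
  assume h: "lab (pc i) = letter (2 * pk i + sd)"
  show False
  proof (cases "sd = 0")
    case True
    hence "lab (pc i) = lab 0" using h by (simp add: letter_def la_def)
    thus False using lab_eq[OF pc_lt[OF assms(1)], of 0] n3 pc_ge[of i] by simp
  next
    case False
    hence sd: "sd = 1" using sd1 by simp
    hence "lab (pc i) = lab 1" using h by (simp add: letter_def lb_def)
    hence "pc i = 1" using lab_eq[OF pc_lt[OF assms(1)], of 1] n3 by simp
    hence "i = 0" using pc_one by simp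
    thus False using nz sd by simp
  qed
qed

end

lemma AR1:
  fixes z k c q :: nat
  assumes "z > 0" "k < z" "c \<ge> 2"
  shows "(\<exists>i<q. i \<noteq> 0 \<and> (i - 1) mod z = k \<and> 2 + (i - 1) div z = c) = ((c - 2) * z + k + 1 < q)"
proof
  assume "\<exists>i<q. i \<noteq> 0 \<and> (i - 1) mod z = k \<and> 2 + (i - 1) div z = c"
  then obtain i where i: "i < q" "i \<noteq> 0" "(i - 1) mod z = k" "2 + (i - 1) div z = c" by blast
  have d: "(i - 1) div z = c - 2" using i(4) by simp
  have "i - 1 = (i - 1) div z * z + (i - 1) mod z" by simp
  hence "i - 1 = (c - 2) * z + k" unfolding d i(3) .
  thus "(c - 2) * z + k + 1 < q" using i by simp
next
  assume h: "(c - 2) * z + k + 1 < q"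
  let ?i = "(c - 2) * z + k + 1"
  have "(?i - 1) mod z = k" using assms by simp
  moreover have "(?i - 1) div z = c - 2" using assms by simp
  ultimately show "\<exists>i<q. i \<noteq> 0 \<and> (i - 1) mod z = k \<and> 2 + (i - 1) div z = c"
    using h assms by (intro exI[of _ ?i]) auto
qed

lemma AR2:
  fixes z c q :: nat
  assumes "z > 0" "c \<ge> 2"
  shows "(\<forall>k<z. (c - 2) * z + k + 1 < q) = ((c - 1) * z < q)"
proof -
  obtain d where d: "c = d + 2" using assms(2) by (metis le_add_diff_inverse2)
  have e: "(c - 1) * z = (c - 2) * z + z" using d by simp
  show ?thesis
  proof
    assume h: "\<forall>k<z. (c - 2) * z + k + 1 < q"
    have zz: "z - 1 < z" using assms(1) by simp
    have "(c - 2) * z + (z - 1) + 1 < q" using mp[OF spec[OF h, of "z - 1"] zz] .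
    moreover have "(c - 2) * z + (z - 1) + 1 = (c - 2) * z + z" using assms(1) by simp
    ultimately show "(c - 1) * z < q" using e by linarith
  next
    assume "(c - 1) * z < q"
    thus "\<forall>k<z. (c - 2) * z + k + 1 < q" using e by auto
  qed
qed

context constr begin

lemma pend_notin: assumes "i < q" shows "pend i \<notin> aw ` {..<2*z}"
proof
  assume "pend i \<in> aw ` {..<2*z}"
  then obtain M where M0: "pend i = aw M" "M \<in> {..<2*z}" by (rule imageE)
  hence M: "M < 2*z" "aw M = pend i" by auto
  hence h: "M = Suc (2 * pk i + sd) \<and> lab (pc i) = letter (2 * pk i + sd)"
    unfolding pend_def aw_eq_app by simp
  show False
  proof (cases "sd = 0 \<or> i \<noteq> 0")
    case True thus False using pend_letter[OF assms True] h by simp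
  next
    case False
    hence "sd = 1" "pk i = z - 1" using sd1 by (auto simp: pk_def)
    thus False using h M z1 by simp
  qed
qed

lemma pend_inj: "inj_on pend {..<q}"
proof (rule inj_onI)
  fix i i' assume i: "i \<in> {..<q}" "i' \<in> {..<q}" and e: "pend i = pend i'"
  hence "aw (2 * pk i + sd) = aw (2 * pk i' + sd) \<and> lab (pc i) = lab (pc i')"
    unfolding pend_def by simp
  hence "pk i = pk i'" "pc i = pc i'" using lab_eq[OF pc_lt pc_lt] i by auto
  thus "i = i'" using pc_pk_inj i by auto
qed

lemma tv_TS: "\<forall>v\<in>TS. tree_vertex n v"
proof
  fix v assume "v \<in> TS"
  then consider (a) L where "v = aw L" | (p) i where "i < q" "v = pend i" unfolding TS_def by blast
  thus "tree_vertex n v"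
  proof cases
    case a thus ?thesis using tv_aw by simp
  next
    case p
    show ?thesis unfolding p(2) pend_def
    proof (rule tv_app[OF lab_rng[OF pc_lt[OF p(1)]]])
      assume L: "2 * pk i + sd > 0"
      show "lab (pc i) \<noteq> letter (2 * pk i + sd - 1)"
      proof (cases "sd = 0")
        case True
        have "i \<noteq> 0"
        proof
          assume i0: "i = 0"
          have "pk i = 0" unfolding pk_def using True i0 by simp
          thus False using L True by simp
        qed
        hence "pc i \<noteq> 1" using pc_one by simp
        moreover have "letter (2 * pk i + sd - 1) = lab 1" using True L
          by (auto simp: letter_def lb_def)
        ultimately show ?thesis using lab_eq[OF pc_lt[OF p(1)], of 1] n3 by simp
      next
        case False
        hence "letter (2 * pk i + sd - 1) = lab 0" using sd1 by (auto simp: letter_def la_def)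
        thus ?thesis using lab_eq[OF pc_lt[OF p(1)], of 0] n3 pc_ge[of i] by simp
      qed
    qed
  qed
qed

lemma root_TS: "[] \<in> TS" using z1 unfolding TS_def by (auto simp: image_iff aw_def intro!: bexI[of _ 0])

lemma fin_TS: "finite TS" unfolding TS_def by simp

lemma cl_TS: "\<forall>v\<in>TS. v \<noteq> [] \<longrightarrow> butlast v \<in> TS"
proof (intro ballI impI)
  fix v assume v: "v \<in> TS" "v \<noteq> []"
  then consider (a) L where "L < 2*z" "v = aw L" | (p) i where "i < q" "v = pend i" unfolding TS_def by blast
  thus "butlast v \<in> TS"
  proof cases
    case a
    then obtain M where "L = Suc M" using v by (cases L) (auto simp: aw_def)
    thus ?thesis using a by (auto simp: TS_def aw_Suc)
  next
    case p
    have "2 * pk i + sd < 2 * z" using pk_lt[of i] sd1 by simp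
    thus ?thesis using p by (auto simp: TS_def pend_def)
  qed
qed

definition "Ev = (\<lambda>k. aw (2*k)) ` {..<z}"
definition "Od = (\<lambda>k. aw (2*k+1)) ` {..<z}"

lemma spine_split: "aw ` {..<2*z} = Ev \<union> Od"
proof
  show "aw ` {..<2*z} \<subseteq> Ev \<union> Od"
  proof
    fix v assume "v \<in> aw ` {..<2*z}"
    then obtain L where L: "L < 2*z" "v = aw L" by blast
    show "v \<in> Ev \<union> Od"
    proof (cases "even L")
      case True
      hence e: "v = aw (2 * (L div 2))" using L by simp
      have "v \<in> Ev" unfolding Ev_def using e L by (intro image_eqI[where x = "L div 2"]) auto
      thus ?thesis by simp
    next
      case False
      hence e: "v = aw (2 * (L div 2) + 1)" using L by simp
      have "v \<in> Od" unfolding Od_def using e L by (intro image_eqI[where x = "L div 2"]) auto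
      thus ?thesis by simp
    qed
  qed
  show "Ev \<union> Od \<subseteq> aw ` {..<2*z}" by (auto simp: Ev_def Od_def)
qed

lemma card_Ev: "card Ev = z"
  unfolding Ev_def by (subst card_image) (auto simp: inj_on_def)

lemma card_Od: "card Od = z"
  unfolding Od_def by (subst card_image) (auto simp: inj_on_def)

lemma card_pend: "card (pend ` {..<q}) = q"
  using pend_inj by (simp add: card_image)

lemma Ev_src: "u \<in> Ev \<Longrightarrow> is_source u" by (auto simp: Ev_def is_source_def)
lemma Od_snk: "u \<in> Od \<Longrightarrow> \<not> is_source u" by (auto simp: Od_def is_source_def)
lemma pend_src: "u \<in> pend ` {..<q} \<Longrightarrow> is_source u = (sd = 1)"
proof -
  assume "u \<in> pend ` {..<q}"
  then obtain i where "u = pend i" by blast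
  hence "length u = Suc (2 * pk i + sd)" by (simp add: pend_def)
  moreover have "sd = 0 \<or> sd = 1" using sd1 by arith
  ultimately show ?thesis by (auto simp: is_source_def)
qed

lemma TS_split: "TS = Ev \<union> Od \<union> pend ` {..<q}"
  unfolding TS_def spine_split ..

lemma pend_src1: "sd = 1 \<Longrightarrow> u \<in> pend ` {..<q} \<Longrightarrow> is_source u" using pend_src by blast
lemma pend_snk0: "sd \<noteq> 1 \<Longrightarrow> u \<in> pend ` {..<q} \<Longrightarrow> \<not> is_source u" using pend_src by blast

lemma src_TS: "{u\<in>TS. is_source u} = Ev \<union> (if sd = 1 then pend ` {..<q} else {})"
proof (rule Set.set_eqI)
  fix u
  show "u \<in> {u\<in>TS. is_source u} \<longleftrightarrow> u \<in> Ev \<union> (if sd = 1 then pend ` {..<q} else {})"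
  proof (cases "sd = 1")
    case True
    thus ?thesis unfolding TS_split using Ev_src[of u] Od_snk[of u] pend_src1[OF True, of u] by auto
  next
    case False
    thus ?thesis unfolding TS_split using Ev_src[of u] Od_snk[of u] pend_snk0[OF False, of u] by auto
  qed
qed

lemma snk_TS: "{u\<in>TS. \<not> is_source u} = Od \<union> (if sd = 0 then pend ` {..<q} else {})"
proof (rule Set.set_eqI)
  fix u
  show "u \<in> {u\<in>TS. \<not> is_source u} \<longleftrightarrow> u \<in> Od \<union> (if sd = 0 then pend ` {..<q} else {})"
  proof (cases "sd = 1")
    case True
    thus ?thesis unfolding TS_split using Ev_src[of u] Od_snk[of u] pend_src1[OF True, of u] by auto
  next
    case False
    hence "sd = 0" using sd1 by simp
    thus ?thesis unfolding TS_split using Ev_src[of u] Od_snk[of u] pend_snk0[OF False, of u] by auto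
  qed
qed

lemma disj: "Ev \<inter> Od = {}" "Ev \<inter> pend ` {..<q} = {}" "Od \<inter> pend ` {..<q} = {}"
proof -
  show "Ev \<inter> Od = {}" using Ev_src Od_snk by blast
  show "Ev \<inter> pend ` {..<q} = {}" "Od \<inter> pend ` {..<q} = {}"
    using pend_notin spine_split by blast+
qed

lemma card_src: "card {u\<in>TS. is_source u} = z + (if sd = 1 then q else 0)"
proof (cases "sd = 1")
  case True
  thus ?thesis unfolding src_TS using disj card_Ev card_pend
    by (simp add: card_Un_disjoint Ev_def)
next
  case False
  thus ?thesis unfolding src_TS using card_Ev by simp
qed

lemma card_snk: "card {u\<in>TS. \<not> is_source u} = z + (if sd = 0 then q else 0)"
proof (cases "sd = 0")
  case True
  thus ?thesis unfolding snk_TS using disj card_Od card_pend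
    by (simp add: card_Un_disjoint Od_def)
next
  case False
  thus ?thesis unfolding snk_TS using card_Od by simp
qed

lemma base_TS: "{u\<in>TS. is_source u = (sd = 0)} = (\<lambda>k. aw (2*k+sd)) ` {..<z}"
proof (cases "sd = 0")
  case True
  hence "{u\<in>TS. is_source u = (sd = 0)} = {u\<in>TS. is_source u}" by simp
  thus ?thesis unfolding src_TS using True by (simp add: Ev_def)
next
  case False
  hence "sd = 1" using sd1 by simp
  hence "{u\<in>TS. is_source u = (sd = 0)} = {u\<in>TS. \<not> is_source u}" by simp
  thus ?thesis unfolding snk_TS using \<open>sd = 1\<close> by (simp add: Od_def)
qed

end

context constr begin

lemma letter_even: "letter (2*k) = lab 0" by (simp add: letter_def la_def)
lemma letter_odd: "letter (2*k+1) = lab 1" by (simp add: letter_def lb_def)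

lemma aw_in: "L < 2*z \<Longrightarrow> aw L \<in> TS" unfolding TS_def by simp

lemma pend_in: "i < q \<Longrightarrow> pend i \<in> TS" unfolding TS_def by simp

lemma mem_app:
  assumes "l \<noteq> letter L"
  shows "(aw L @ [l] \<in> TS) = (\<exists>i<q. 2 * pk i + sd = L \<and> lab (pc i) = l)"
proof
  assume "aw L @ [l] \<in> TS"
  hence "aw L @ [l] \<in> aw ` {..<2*z} \<or> aw L @ [l] \<in> pend ` {..<q}" unfolding TS_def by simp
  moreover have "aw L @ [l] \<notin> aw ` {..<2*z}"
  proof
    assume "aw L @ [l] \<in> aw ` {..<2*z}"
    then obtain M where "aw L @ [l] = aw M" by (rule imageE)
    thus False using assms aw_eq_app by metis
  qed
  ultimately obtain i where i: "i \<in> {..<q}" "aw L @ [l] = pend i" by (auto elim: imageE)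
  hence "aw L = aw (2 * pk i + sd) \<and> l = lab (pc i)" unfolding pend_def by simp
  thus "\<exists>i<q. 2 * pk i + sd = L \<and> lab (pc i) = l" using i by auto
next
  assume "\<exists>i<q. 2 * pk i + sd = L \<and> lab (pc i) = l"
  then obtain i where i: "i < q" "2 * pk i + sd = L" "lab (pc i) = l" by blast
  hence "aw L @ [l] = pend i" unfolding pend_def by simp
  thus "aw L @ [l] \<in> TS" using pend_in[OF i(1)] by simp
qed

lemma key_0: "k < z \<Longrightarrow> tstep (aw (2*k+sd)) (lab 0) \<in> TS"
proof -
  assume k: "k < z"
  show ?thesis
  proof (cases "sd = 0")
    case True
    have ne: "\<not> (2*k > 0 \<and> letter (2*k - 1) = lab 0)"
    proof
      assume h: "2*k > 0 \<and> letter (2*k - 1) = lab 0"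
      then obtain k' where "k = Suc k'" by (cases k) auto
      hence "letter (2*k - 1) = lab 1" using letter_odd[of k'] by simp
      thus False using h lab_eq[of 0 1] n3 by simp
    qed
    have "tstep (aw (2*k)) (lab 0) = aw (2*k) @ [lab 0]" unfolding tstep_aw by (rule if_not_P[OF ne])
    also have "\<dots> = aw (Suc (2*k))" by (simp add: aw_Suc letter_even)
    finally show ?thesis using True aw_in[of "Suc (2*k)"] k by simp
  next
    case False
    hence s1: "sd = 1" using sd1 by simp
    have "tstep (aw (2*k+1)) (lab 0) = aw (2*k)" by (simp add: tstep_aw letter_even)
    thus ?thesis using s1 aw_in[of "2*k"] k by simp
  qed
qed

lemma key_1: "(\<forall>k<z. tstep (aw (2*k+sd)) (lab 1) \<in> TS) = (0 < q)"
proof (cases "sd = 0")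
  case True
  show ?thesis
  proof
    assume h: "\<forall>k<z. tstep (aw (2*k+sd)) (lab 1) \<in> TS"
    have "tstep (aw 0) (lab 1) \<in> TS" using h[rule_format, of 0] z1 True by simp
    moreover have "tstep (aw 0) (lab 1) = aw 0 @ [lab 1]" by (simp add: tstep_aw)
    moreover have "lab 1 \<noteq> letter 0" using lab_eq[of 1 0] n3 letter_even[of 0] by simp
    ultimately have "\<exists>i<q. 2 * pk i + sd = 0 \<and> lab (pc i) = lab 1" using mem_app by simp
    thus "0 < q" by auto
  next
    assume q: "0 < q"
    show "\<forall>k<z. tstep (aw (2*k+sd)) (lab 1) \<in> TS"
    proof (intro allI impI)
      fix k assume k: "k < z"
      show "tstep (aw (2*k+sd)) (lab 1) \<in> TS"
      proof (cases k)
        case 0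
        have "pend 0 = aw 0 @ [lab 1]" unfolding pend_def pk_def pc_def using True by simp
        moreover have "tstep (aw 0) (lab 1) = aw 0 @ [lab 1]" by (simp add: tstep_aw)
        ultimately show ?thesis using pend_in[OF q] 0 True by simp
      next
        case (Suc k')
        have "2*k - 1 = 2*k' + 1" using Suc by simp
        hence lo: "letter (2*k - 1) = lab 1" using letter_odd[of k'] by simp
        have "tstep (aw (2*k)) (lab 1) = aw (2*k - 1)" unfolding tstep_aw
          by (rule if_P) (use Suc lo in simp)
        thus ?thesis using aw_in[of "2*k - 1"] k True by simp
      qed
    qed
  qed
next
  case False
  hence s1: "sd = 1" using sd1 by simp
  have ts: "\<And>k. tstep (aw (2*k+1)) (lab 1) = aw (2*k+2)"
  proof -
    fix k
    have "lab 0 \<noteq> lab 1" using lab_eq[of 0 1] n3 by simp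
    hence "tstep (aw (2*k+1)) (lab 1) = aw (2*k+1) @ [lab 1]" by (simp add: tstep_aw letter_even)
    also have "\<dots> = aw (2*k+2)" using aw_Suc[of "2*k+1"] letter_odd[of k] by simp
    finally show "tstep (aw (2*k+1)) (lab 1) = aw (2*k+2)" .
  qed
  show ?thesis
  proof
    assume h: "\<forall>k<z. tstep (aw (2*k+sd)) (lab 1) \<in> TS"
    have "aw (2*(z-1)+2) \<in> TS" using h[rule_format, of "z - 1"] z1 s1 ts by simp
    moreover have "2*(z-1)+2 = 2*z" using z1 by simp
    ultimately have "aw (2*z) \<in> TS" by simp
    moreover have "aw (2*z) \<notin> aw ` {..<2*z}" by auto
    ultimately have "aw (2*z) \<in> pend ` {..<q}" unfolding TS_def by simp
    thus "0 < q" by auto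
  next
    assume q: "0 < q"
    show "\<forall>k<z. tstep (aw (2*k+sd)) (lab 1) \<in> TS"
    proof (intro allI impI)
      fix k assume k: "k < z"
      show "tstep (aw (2*k+sd)) (lab 1) \<in> TS"
      proof (cases "Suc k < z")
        case True
        thus ?thesis using ts[of k] s1 aw_in[of "2*k+2"] by simp
      next
        case False
        hence kz: "k = z - 1" using k by simp
        have "pend 0 = aw (2 * (z - 1) + 1) @ [lab 1]" unfolding pend_def pk_def pc_def using s1 by simp
        also have "\<dots> = aw (2 * (z - 1) + 2)" using aw_Suc[of "2*(z-1)+1"] letter_odd[of "z-1"] by simp
        finally show ?thesis using ts[of k] s1 kz pend_in[OF q] by simp
      qed
    qed
  qed
qed

lemma key_ge2:
  assumes c: "c < n" "2 \<le> c"
  shows "(\<forall>k<z. tstep (aw (2*k+sd)) (lab c) \<in> TS) = ((c - 1) * z < q)"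
proof -
  have l0: "lab c \<noteq> lab 0" and l1: "lab c \<noteq> lab 1" using lab_eq[OF c(1)] n3 c by auto
  have nl: "\<And>L. lab c \<noteq> letter L" using l0 l1 by (simp add: letter_def la_def lb_def)
  have each: "\<And>k. k < z \<Longrightarrow> (tstep (aw (2*k+sd)) (lab c) \<in> TS) = ((c - 2) * z + k + 1 < q)"
  proof -
    fix k assume k: "k < z"
    have nc: "\<not> (2*k+sd > 0 \<and> letter (2*k+sd-1) = lab c)" using nl by metis
    have "tstep (aw (2*k+sd)) (lab c) = aw (2*k+sd) @ [lab c]" unfolding tstep_aw by (rule if_not_P[OF nc])
    hence "(tstep (aw (2*k+sd)) (lab c) \<in> TS) = (\<exists>i<q. 2 * pk i + sd = 2*k+sd \<and> lab (pc i) = lab c)"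
      using mem_app[OF nl] by simp
    also have "\<dots> = (\<exists>i<q. pk i = k \<and> pc i = c)"
      using lab_eq[OF pc_lt c(1)] by auto
    also have "\<dots> = (\<exists>i<q. i \<noteq> 0 \<and> (i - 1) mod z = k \<and> 2 + (i - 1) div z = c)"
    proof
      assume "\<exists>i<q. pk i = k \<and> pc i = c"
      then obtain i where i: "i < q" "pk i = k" "pc i = c" by blast
      have "i \<noteq> 0" using i(3) c(2) pc_one[of i] by (auto simp: pc_def)
      thus "\<exists>i<q. i \<noteq> 0 \<and> (i - 1) mod z = k \<and> 2 + (i - 1) div z = c" using i
        by (intro exI[of _ i]) (simp add: pk_def pc_def)
    next
      assume "\<exists>i<q. i \<noteq> 0 \<and> (i - 1) mod z = k \<and> 2 + (i - 1) div z = c"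
      then obtain i where i: "i < q" "i \<noteq> 0" "(i - 1) mod z = k" "2 + (i - 1) div z = c" by blast
      thus "\<exists>i<q. pk i = k \<and> pc i = c" by (intro exI[of _ i]) (simp add: pk_def pc_def)
    qed
    also have "\<dots> = ((c - 2) * z + k + 1 < q)" using AR1[of z k c q] z1 k c(2) by simp
    finally show "(tstep (aw (2*k+sd)) (lab c) \<in> TS) = ((c - 2) * z + k + 1 < q)" .
  qed
  have "(\<forall>k<z. tstep (aw (2*k+sd)) (lab c) \<in> TS) = (\<forall>k<z. (c - 2) * z + k + 1 < q)"
    using each by auto
  also have "\<dots> = ((c - 1) * z < q)" using AR2[of z c q] z1 c(2) by simp
  finally show ?thesis .
qed

lemma key:
  assumes c: "c < n"
  shows "(\<forall>k<z. tstep (aw (2*k+sd)) (lab c) \<in> TS) = (c = 0 \<or> (c - 1) * z < q)"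
proof -
  consider "c = 0" | "c = 1" | "2 \<le> c" by arith
  thus ?thesis
  proof cases
    case 1 thus ?thesis using key_0 by simp
  next
    case 2 thus ?thesis using key_1 by simp
  next
    case 3 thus ?thesis using key_ge2[OF c] by simp
  qed
qed

end

definition pmat :: "nat \<Rightarrow> nat list set \<Rightarrow> (nat \<Rightarrow> nat list) \<Rightarrow> (nat \<Rightarrow> nat list) \<Rightarrow> nat \<Rightarrow> 'k::field mat" where
  "pmat n S e1 e2 = snd (snd (pushdown n S (\<lambda>_ _. 1::'k) e1 e2))"

lemma pushdown_eq: "pushdown n S (\<lambda>_ _. 1::'k::field) e1 e2 =
   (card {u\<in>S. is_source u}, card {w\<in>S. \<not> is_source w}, pmat n S e1 e2)"
  unfolding pmat_def pushdown_def Let_def by simp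

lemma pmat_carrier: "pmat n S e1 e2 i \<in> carrier_mat (card {w\<in>S. \<not> is_source w}) (card {u\<in>S. is_source u})"
  unfolding pmat_def pushdown_def Let_def by simp

locale pdctx =
  fixes n :: nat and S :: "nat list set" and e1 e2 :: "nat \<Rightarrow> nat list"
  assumes tv: "\<forall>v\<in>S. tree_vertex n v"
    and b1: "bij_betw e1 {..<card {u\<in>S. is_source u}} {u\<in>S. is_source u}"
    and b2: "bij_betw e2 {..<card {w\<in>S. \<not> is_source w}} {w\<in>S. \<not> is_source w}"

context pdctx begin

abbreviation "na \<equiv> card {u\<in>S. is_source u}"

abbreviation "nb \<equiv> card {w\<in>S. \<not> is_source w}"

lemma e1_in: "c < na \<Longrightarrow> e1 c \<in> S \<and> is_source (e1 c)"
  using b1 unfolding bij_betw_def by auto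
lemma e2_in: "r < nb \<Longrightarrow> e2 r \<in> S \<and> \<not> is_source (e2 r)"
  using b2 unfolding bij_betw_def by auto
lemma e1_img: "e1 ` {..<na} = {u\<in>S. is_source u}" using b1 unfolding bij_betw_def by auto
lemma e2_img: "e2 ` {..<nb} = {w\<in>S. \<not> is_source w}" using b2 unfolding bij_betw_def by auto

lemma entry:
  assumes r: "r < nb" and c: "c < na"
  shows "(pmat n S e1 e2 i :: 'k::field mat) $$ (r,c) = (if e2 r = tstep (e1 c) i then 1 else 0)"
  using r c e1_in[OF c] e2_in[OF r] unfolding pmat_def pushdown_def Let_def thin_map_def
  by auto

lemma tinj: "u \<in> S \<Longrightarrow> u' \<in> S \<Longrightarrow> tstep u i = tstep u' i \<Longrightarrow> u = u'"
  using tv tstep_invol by metis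

lemma pd_inj: "inj_mat (pmat n S e1 e2 i :: 'k::field mat) = (\<forall>u\<in>S. is_source u \<longrightarrow> tstep u i \<in> S)"
proof -
  have car: "(pmat n S e1 e2 i :: 'k mat) \<in> carrier_mat nb na" by (rule pmat_carrier)
  have ent: "\<And>r c. r < nb \<Longrightarrow> c < na \<Longrightarrow> (pmat n S e1 e2 i :: 'k mat) $$ (r,c) = (if e2 r = (\<lambda>u. tstep u i) (e1 c) then 1 else 0)"
    by (simp add: entry)
  show ?thesis
proof
  assume inj: "inj_mat (pmat n S e1 e2 i :: 'k mat)"
  show "\<forall>u\<in>S. is_source u \<longrightarrow> tstep u i \<in> S"
  proof (rule ccontr)
    assume "\<not> (\<forall>u\<in>S. is_source u \<longrightarrow> tstep u i \<in> S)"
    then obtain u where u: "u \<in> S" "is_source u" "tstep u i \<notin> S" by blast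
    then obtain c where c: "c < na" "e1 c = u" using e1_img by (metis (mono_tags, lifting) imageE lessThan_iff mem_Collect_eq)
    have "tstep (e1 c) i \<notin> e2 ` {..<nb}" using e2_img u c by auto
    from pp_noninj[where f=e2 and g=e1 and \<phi>="\<lambda>u. tstep u i", OF car ent c(1)] this inj show False by auto
  qed
next
  assume all: "\<forall>u\<in>S. is_source u \<longrightarrow> tstep u i \<in> S"
  show "inj_mat (pmat n S e1 e2 i :: 'k mat)"
  proof (rule pp_inj[where f=e2 and g=e1 and \<phi>="\<lambda>u. tstep u i", OF car ent])
    show "inj_on e2 {..<nb}" using b2 by (simp add: bij_betw_def)
    show "inj_on (\<lambda>c. tstep (e1 c) i) {..<na}"
    proof (rule inj_onI)
      fix c c' assume "c \<in> {..<na}" "c' \<in> {..<na}" "tstep (e1 c) i = tstep (e1 c') i"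
      hence "e1 c = e1 c'" using tinj e1_in by auto
      thus "c = c'" using b1 \<open>c \<in> _\<close> \<open>c' \<in> _\<close> unfolding bij_betw_def inj_on_def by auto
    qed
    fix c assume c: "c < na"
    have "tstep (e1 c) i \<in> S" using all e1_in[OF c] by auto
    moreover have "\<not> is_source (tstep (e1 c) i)" using e1_in[OF c] tstep_source by auto
    ultimately show "tstep (e1 c) i \<in> e2 ` {..<nb}" using e2_img by auto
  qed
qed
qed

lemma entryT:
  assumes r: "r < na" and c: "c < nb"
  shows "transpose_mat (pmat n S e1 e2 i :: 'k::field mat) $$ (r,c) = (if e1 r = tstep (e2 c) i then 1 else 0)"
proof -
  have car: "(pmat n S e1 e2 i :: 'k mat) \<in> carrier_mat nb na" by (rule pmat_carrier)
  have "transpose_mat (pmat n S e1 e2 i :: 'k mat) $$ (r,c) = (pmat n S e1 e2 i :: 'k mat) $$ (c,r)"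
    using car r c by auto
  also have "\<dots> = (if e2 c = tstep (e1 r) i then 1 else 0)" by (rule entry[OF c r])
  also have "(e2 c = tstep (e1 r) i) = (e1 r = tstep (e2 c) i)"
    using tv e1_in[OF r] e2_in[OF c] tstep_invol by metis
  finally show ?thesis .
qed

lemma pd_injT: "inj_mat (transpose_mat (pmat n S e1 e2 i :: 'k::field mat)) = (\<forall>w\<in>S. \<not> is_source w \<longrightarrow> tstep w i \<in> S)"
proof -
  have car0: "(pmat n S e1 e2 i :: 'k mat) \<in> carrier_mat nb na" by (rule pmat_carrier)
  have car: "transpose_mat (pmat n S e1 e2 i :: 'k mat) \<in> carrier_mat na nb" using car0 by simp
  have ent: "\<And>r c. r < na \<Longrightarrow> c < nb \<Longrightarrow> transpose_mat (pmat n S e1 e2 i :: 'k mat) $$ (r,c) = (if e1 r = (\<lambda>w. tstep w i) (e2 c) then 1 else 0)"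
    by (simp add: entryT)
  show ?thesis
  proof
    assume inj: "inj_mat (transpose_mat (pmat n S e1 e2 i :: 'k mat))"
    show "\<forall>w\<in>S. \<not> is_source w \<longrightarrow> tstep w i \<in> S"
    proof (rule ccontr)
      assume "\<not> (\<forall>w\<in>S. \<not> is_source w \<longrightarrow> tstep w i \<in> S)"
      then obtain w where w: "w \<in> S" "\<not> is_source w" "tstep w i \<notin> S" by blast
      then obtain c where c: "c < nb" "e2 c = w" using e2_img by (metis (mono_tags, lifting) imageE lessThan_iff mem_Collect_eq)
      have "tstep (e2 c) i \<notin> e1 ` {..<na}" using e1_img w c by auto
      from pp_noninj[where f=e1 and g=e2 and \<phi>="\<lambda>w. tstep w i", OF car ent c(1)] this inj show False by auto
    qed
  next
    assume all: "\<forall>w\<in>S. \<not> is_source w \<longrightarrow> tstep w i \<in> S"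
    show "inj_mat (transpose_mat (pmat n S e1 e2 i :: 'k mat))"
    proof (rule pp_inj[where f=e1 and g=e2 and \<phi>="\<lambda>w. tstep w i", OF car ent])
      show "inj_on e1 {..<na}" using b1 by (simp add: bij_betw_def)
      show "inj_on (\<lambda>c. tstep (e2 c) i) {..<nb}"
      proof (rule inj_onI)
        fix c c' assume "c \<in> {..<nb}" "c' \<in> {..<nb}" "tstep (e2 c) i = tstep (e2 c') i"
        hence "e2 c = e2 c'" using tinj e2_in by auto
        thus "c = c'" using b2 \<open>c \<in> _\<close> \<open>c' \<in> _\<close> unfolding bij_betw_def inj_on_def by auto
      qed
      fix c assume c: "c < nb"
      have "tstep (e2 c) i \<in> S" using all e2_in[OF c] by auto
      moreover have "is_source (tstep (e2 c) i)" using e2_in[OF c] tstep_source by auto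
      ultimately show "tstep (e2 c) i \<in> e1 ` {..<na}" using e1_img by auto
    qed
  qed
qed

end

lemma inv_ex:
  assumes "invertible_mat (P :: 'k::field mat)" "P \<in> carrier_mat m m"
  shows "\<exists>Q\<in>carrier_mat m m. P * Q = 1\<^sub>m m \<and> Q * P = 1\<^sub>m m"
proof -
  obtain Q where Q: "P * Q = 1\<^sub>m (dim_row P)" "Q * P = 1\<^sub>m (dim_row Q)"
    using assms(1) unfolding invertible_mat_def inverts_mat_def by blast
  have dr: "dim_row P = m" "dim_col P = m" using assms(2) by auto
  have "dim_col Q = m" using arg_cong[OF Q(1), of dim_col] dr by simp
  moreover have "dim_row Q = m" using arg_cong[OF Q(2), of dim_col] dr by simp
  ultimately show ?thesis using Q dr by (intro bexI[of _ Q]) auto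
qed

lemma iso_inj:
  fixes A A' :: "nat \<Rightarrow> 'k::field mat"
  assumes iso: "kmod_iso n (a, b, A) (a', b', A')" and i: "i < n"
    and cA: "A i \<in> carrier_mat b a" and cA': "A' i \<in> carrier_mat b' a'"
  shows "(inj_mat (A i) = inj_mat (A' i)) \<and> (inj_mat (transpose_mat (A i)) = inj_mat (transpose_mat (A' i)))"
proof -
  from iso obtain P R where ab: "a = a'" "b = b'" and P: "P \<in> carrier_mat a a" and R: "R \<in> carrier_mat b b"
    and iP: "invertible_mat P" and iR: "invertible_mat R" and eq: "R * A i = A' i * P"
    using i unfolding kmod_iso_def by auto
  obtain Q where Q: "Q \<in> carrier_mat a a" "P * Q = 1\<^sub>m a" "Q * P = 1\<^sub>m a" using inv_ex[OF iP P] by blast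
  obtain Ri where Ri: "Ri \<in> carrier_mat b b" "R * Ri = 1\<^sub>m b" "Ri * R = 1\<^sub>m b" using inv_ex[OF iR R] by blast
  have cA'': "A' i \<in> carrier_mat b a" using cA' ab by simp
  have 1: "inj_mat (A i) = inj_mat (A' i)"
    using inj_transfer1[OF cA cA'' R P Q(1) Q(3) eq] inj_transfer2[OF cA cA'' R Ri(1) P Q(1) Ri(3) Q(2) eq] by blast
  have eqT: "transpose_mat P * transpose_mat (A' i) = transpose_mat (A i) * transpose_mat R"
  proof -
    have "transpose_mat (R * A i) = transpose_mat (A i) * transpose_mat R" using transpose_mult[OF R cA] .
    moreover have "transpose_mat (A' i * P) = transpose_mat P * transpose_mat (A' i)" using transpose_mult[OF cA'' P] .
    ultimately show ?thesis using eq by simp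
  qed
  have tA: "transpose_mat (A' i) \<in> carrier_mat a b" "transpose_mat (A i) \<in> carrier_mat a b" using cA cA'' by auto
  have tP: "transpose_mat P \<in> carrier_mat a a" "transpose_mat Q \<in> carrier_mat a a" using P Q by auto
  have tR: "transpose_mat R \<in> carrier_mat b b" "transpose_mat Ri \<in> carrier_mat b b" using R Ri by auto
  have i1: "transpose_mat Ri * transpose_mat R = 1\<^sub>m b"
    using transpose_mult[OF R Ri(1)] Ri(2) by simp
  have i2: "transpose_mat Q * transpose_mat P = 1\<^sub>m a"
    using transpose_mult[OF P Q(1)] Q(2) by simp
  have i3: "transpose_mat R * transpose_mat Ri = 1\<^sub>m b"
    using transpose_mult[OF Ri(1) R] Ri(3) by simp
  have 2: "inj_mat (transpose_mat (A' i)) = inj_mat (transpose_mat (A i))"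
    using inj_transfer1[OF tA(1) tA(2) tP(1) tR(1) tR(2) i1 eqT]
      inj_transfer2[OF tA(1) tA(2) tP(1) tP(2) tR(1) tR(2) i2 i3 eqT] by blast
  show ?thesis using 1 2 by simp
qed

definition rot :: "nat \<Rightarrow> nat \<Rightarrow> nat \<Rightarrow> nat" where
  "rot n j c = (if j + c < n then j + c else j + c - n)"

lemma rot_lt: "j < n \<Longrightarrow> c < n \<Longrightarrow> rot n j c < n" unfolding rot_def by arith

lemma rot_inj: "j < n \<Longrightarrow> inj_on (rot n j) {..<n}"
  by (auto simp: inj_on_def rot_def split: if_splits)

lemma comb:
  fixes P :: "nat \<Rightarrow> bool"
  assumes P0: "P 0" and Pn: "\<not> P (n - 1)" and mono: "\<forall>c c'. c' \<le> c \<longrightarrow> P c \<longrightarrow> P c'"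
    and j: "j < n" and l: "l < n" and jl: "j \<noteq> l"
  shows "\<exists>t<n. (\<exists>c<n. rot n j c = t \<and> P c) \<noteq> (\<exists>c<n. rot n l c = t \<and> P c)"
proof -
  define m where "m = (LEAST c. \<not> P c)"
  have m: "\<not> P m" unfolding m_def by (rule LeastI[of "\<lambda>c. \<not> P c" "n - 1"]) (rule Pn)
  have m2: "\<And>c. c < m \<Longrightarrow> P c"
  proof -
    fix c assume "c < m"
    hence "\<not> \<not> P c" unfolding m_def by (rule not_less_Least)
    thus "P c" by simp
  qed
  have Pm: "\<And>c. P c = (c < m)"
  proof -
    fix c
    show "P c = (c < m)"
    proof
      assume "P c"
      show "c < m"
      proof (rule ccontr)
        assume "\<not> c < m"
        hence "m \<le> c" by simp
        from mono[rule_format, OF this \<open>P c\<close>] m show False by simp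
      qed
    qed (rule m2)
  qed
  have m1: "m \<ge> 1" using P0 Pm[of 0] by simp
  have mn: "m \<le> n - 1" using Pn Pm[of "n - 1"] by simp
  show ?thesis
  proof (cases "\<exists>c<n. rot n j c = l \<and> P c")
    case False
    moreover have "\<exists>c<n. rot n l c = l \<and> P c" using l P0 by (intro exI[of _ 0]) (simp add: rot_def)
    ultimately show ?thesis using l by blast
  next
    case True
    then obtain c where c: "c < n" "rot n j c = l" "c < m" using Pm by blast
    have c0: "c \<noteq> 0"
    proof
      assume "c = 0"
      thus False using c(2) jl j by (simp add: rot_def)
    qed
    let ?t = "rot n j m"
    have mlt: "m < n" using mn j by simp
    have "\<not> (\<exists>c'<n. rot n j c' = ?t \<and> P c')"
    proof
      assume "\<exists>c'<n. rot n j c' = ?t \<and> P c'"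
      then obtain c' where "c' < n" "rot n j c' = ?t" "c' < m" using Pm by blast
      thus False using rot_inj[OF j] mlt unfolding inj_on_def by fastforce
    qed
    moreover have "rot n l (m - c) = ?t"
    proof (cases "j + c < n")
      case True
      hence l': "l = j + c" using c(2) by (simp add: rot_def)
      have "l + (m - c) = j + m" using l' c(3) by simp
      thus ?thesis by (simp add: rot_def)
    next
      case False
      hence l': "l = j + c - n" using c(2) by (simp add: rot_def)
      have ge: "n \<le> j + m" using False c(3) by simp
      have e: "l + (m - c) = j + m - n" using l' False c(3) by simp
      have "j + m - n < n" using j mlt by simp
      thus ?thesis using e ge by (simp add: rot_def)
    qed
    moreover have "m - c < n" using mlt by simp
    moreover have "P (m - c)" using Pm[of "m - c"] c0 c(3) by simp
    ultimately have B: "\<exists>c'<n. rot n l c' = ?t \<and> P c'" by blast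
    have "?t < n \<and> (\<exists>c'<n. rot n j c' = ?t \<and> P c') \<noteq> (\<exists>c'<n. rot n l c' = ?t \<and> P c')"
      using rot_lt[OF j mlt] B \<open>\<not> (\<exists>c'<n. rot n j c' = ?t \<and> P c')\<close> by simp
    thus ?thesis by (rule exI)
  qed
qed


definition invp :: "nat \<Rightarrow> 'k::field kmod \<Rightarrow> nat \<Rightarrow> bool" where
  "invp sd N i = (case N of (a, b, A) \<Rightarrow> if sd = 0 then inj_mat (A i) else inj_mat (transpose_mat (A i)))"

lemma invp_iso:
  fixes N N' :: "'k::field kmod"
  assumes iso: "kmod_iso n N N'" and v: "kmod_valid n N" and v': "kmod_valid n N'" and i: "i < n"
  shows "invp sd N i = invp sd N' i"
proof -
  obtain a b A where N: "N = (a, b, A)" by (cases N) auto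
  obtain a' b' A' where N': "N' = (a', b', A')" by (cases N') auto
  have cA: "A i \<in> carrier_mat b a" using v i N by (auto simp: kmod_valid_def)
  have cA': "A' i \<in> carrier_mat b' a'" using v' i N' by (auto simp: kmod_valid_def)
  from iso_inj[OF iso[unfolded N N'] i cA cA'] show ?thesis unfolding invp_def N N' by simp
qed

lemma one_invertible: "invertible_mat (1\<^sub>m m :: 'k::field mat)"
  unfolding invertible_mat_def inverts_mat_def square_mat.simps by (auto intro!: exI[of _ "1\<^sub>m m"])

lemma iso_refl:
  fixes N :: "'k::field kmod"
  assumes v: "kmod_valid n N" shows "kmod_iso n N N"
proof -
  obtain a b A where N: "N = (a, b, A)" by (cases N) auto
  have cA: "\<And>i. i < n \<Longrightarrow> A i \<in> carrier_mat b a" using v N by (auto simp: kmod_valid_def)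
  have "\<forall>i<n. 1\<^sub>m b * A i = A i * 1\<^sub>m a"
  proof (intro allI impI)
    fix i assume "i < n"
    thus "1\<^sub>m b * A i = A i * 1\<^sub>m a" using cA[of i] by simp
  qed
  hence "\<exists>P R. P \<in> carrier_mat a a \<and> R \<in> carrier_mat b b \<and> invertible_mat P \<and> invertible_mat R \<and>
        (\<forall>i<n. R * A i = A i * P)"
    using one_invertible[of a] one_invertible[of b] one_carrier_mat by blast
  thus ?thesis unfolding N kmod_iso_def by simp
qed

lemma bij_ex: "finite A \<Longrightarrow> \<exists>e. bij_betw e {..<card A} A"
  using ex_bij_betw_nat_finite[of A] by (simp add: atLeast0LessThan)

context constr begin

lemma lab_surj: "i < n \<Longrightarrow> \<exists>c<n. lab c = i"
proof -
  assume i: "i < n"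
  have "lab ` {..<n} = {..<n}" using endo_inj_surj[of "{..<n}" lab] lab_inj lab_rng by auto
  thus ?thesis using i by (metis imageE lessThan_iff)
qed

lemma per_j:
  "\<exists>N :: 'k::field kmod. cover_thin n N \<and> dimvec N = (z + (if sd = 1 then q else 0), z + (if sd = 0 then q else 0))
     \<and> (\<forall>i<n. invp sd N i = (\<exists>c<n. lab c = i \<and> (c = 0 \<or> (c - 1) * z < q)))"
proof -
  have finS: "finite {u\<in>TS. is_source u}" "finite {w\<in>TS. \<not> is_source w}" using fin_TS by auto
  obtain e1 where e1: "bij_betw e1 {..<card {u\<in>TS. is_source u}} {u\<in>TS. is_source u}" using bij_ex[OF finS(1)] by blast
  obtain e2 where e2: "bij_betw e2 {..<card {w\<in>TS. \<not> is_source w}} {w\<in>TS. \<not> is_source w}" using bij_ex[OF finS(2)] by blast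
  interpret pd: pdctx n TS e1 e2 using tv_TS e1 e2 by unfold_locales
  define N where "N = pushdown n TS (\<lambda>_ _. 1::'k) e1 e2"
  have Neq: "N = (card {u\<in>TS. is_source u}, card {w\<in>TS. \<not> is_source w}, pmat n TS e1 e2)"
    unfolding N_def by (rule pushdown_eq)
  have valid: "kmod_valid n N" unfolding Neq kmod_valid_def using pmat_carrier by auto
  have ct: "cover_thin n N" unfolding cover_thin_def
    using valid thin_indec_rooted[OF fin_TS root_TS tv_TS cl_TS] e1 e2 iso_refl[OF valid]
    unfolding N_def by blast
  have dv: "dimvec N = (z + (if sd = 1 then q else 0), z + (if sd = 0 then q else 0))"
    unfolding Neq dimvec_def using card_src card_snk by simp
  have inv: "\<forall>i<n. invp sd N i = (\<exists>c<n. lab c = i \<and> (c = 0 \<or> (c - 1) * z < q))"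
  proof (intro allI impI)
    fix i assume i: "i < n"
    have "invp sd N i = (\<forall>u\<in>TS. is_source u = (sd = 0) \<longrightarrow> tstep u i \<in> TS)"
      unfolding invp_def Neq using pd.pd_inj[where 'k='k and i=i] pd.pd_injT[where 'k='k and i=i] by auto
    also have "\<dots> = (\<forall>u\<in>{u\<in>TS. is_source u = (sd = 0)}. tstep u i \<in> TS)" by auto
    also have "\<dots> = (\<forall>k<z. tstep (aw (2*k+sd)) i \<in> TS)" unfolding base_TS by auto
    also have "\<dots> = (\<exists>c<n. lab c = i \<and> (c = 0 \<or> (c - 1) * z < q))"
    proof -
      obtain c where c: "c < n" "lab c = i" using lab_surj[OF i] by blast
      have "(\<forall>k<z. tstep (aw (2*k+sd)) i \<in> TS) = (c = 0 \<or> (c - 1) * z < q)" using key[OF c(1)] c(2) by simp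
      moreover have "(\<exists>c'<n. lab c' = i \<and> (c' = 0 \<or> (c' - 1) * z < q)) = (c = 0 \<or> (c - 1) * z < q)"
        using c lab_eq by auto
      ultimately show ?thesis by simp
    qed
    finally show "invp sd N i = (\<exists>c<n. lab c = i \<and> (c = 0 \<or> (c - 1) * z < q))" .
  qed
  show ?thesis using ct dv inv by blast
qed

end

theorem corollary1p2:
  fixes n x y :: nat
  assumes "n \<ge> 2" and "x > 0" and "y > 0"
    and "real x / real (n - 1) < real y" and "real y \<le> real (n - 1) * real x"
  shows "\<exists>N :: nat \<Rightarrow> 'k::field kmod.
           (\<forall>j<n. cover_thin n (N j) \<and> dimvec (N j) = (x, y)) \<and>
           (\<forall>j<n. \<forall>l<n. j \<noteq> l \<longrightarrow> \<not> kmod_iso n (N j) (N l))"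
proof -
  have pos: "real (n - 1) > 0" using assms(1) by simp
  have "real x < real y * real (n - 1)" using assms(4) pos by (simp add: pos_divide_less_eq)
  hence h1: "x < (n - 1) * y" by (metis of_nat_less_iff of_nat_mult mult.commute)
  have h2: "y \<le> (n - 1) * x" using assms(5) by (metis of_nat_le_iff of_nat_mult)
  obtain d where d: "n = d + 2" using assms(1) by (metis le_add_diff_inverse2)
  have n3: "n \<ge> 3"
  proof (rule ccontr)
    assume "\<not> n \<ge> 3"
    hence "n = 2" using assms(1) by simp
    thus False using h1 h2 by simp
  qed
  have e1: "(n - 1) * x = (n - 2) * x + x" and e2: "(n - 1) * y = (n - 2) * y + y" using d by simp_all
  define z where "z = (if x \<le> y then x else y)"
  define q where "q = (if x \<le> y then y - x else x - y)"
  define sd :: nat where "sd = (if x \<le> y then 0 else 1)"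
  define P where "P = (\<lambda>c. c = 0 \<or> (c - 1) * z < q)"
  have z1: "z \<ge> 1" using assms(2,3) by (simp add: z_def)
  have qle: "q \<le> (n - 2) * z" using h1 h2 e1 e2 by (auto simp: q_def z_def)
  have dims: "z + (if sd = 1 then q else 0) = x" "z + (if sd = 0 then q else 0) = y"
    by (auto simp: z_def q_def sd_def)
  have cj: "\<And>j. j < n \<Longrightarrow> constr n (rot n j) z q sd"
    unfolding constr_def using n3 rot_inj rot_lt z1 qle by (auto simp: sd_def)
  define Pr where "Pr = (\<lambda>j (N :: 'k kmod). cover_thin n N \<and> dimvec N = (x, y) \<and>
      (\<forall>i<n. invp sd N i = (\<exists>c<n. rot n j c = i \<and> P c)))"
  have ex: "\<And>j. j < n \<Longrightarrow> \<exists>N. Pr j N"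
  proof -
    fix j assume j: "j < n"
    from constr.per_j[OF cj[OF j], where 'k='k] dims
    show "\<exists>N. Pr j N" unfolding Pr_def P_def by simp
  qed
  define NN where "NN = (\<lambda>j. SOME N. Pr j N)"
  have NN: "\<And>j. j < n \<Longrightarrow> Pr j (NN j)" unfolding NN_def using ex by (metis someI_ex)
  have P0: "P 0" by (simp add: P_def)
  have Pn: "\<not> P (n - 1)" using qle n3 by (simp add: P_def numeral_2_eq_2)
  have Pmono: "\<forall>c c'. c' \<le> c \<longrightarrow> P c \<longrightarrow> P c'"
  proof (intro allI impI)
    fix c c' :: nat assume le: "c' \<le> c" and Pc: "P c"
    have "(c' - 1) * z \<le> (c - 1) * z" using le by (intro mult_le_mono1) simp
    show "P c'"
    proof (cases "c' = 0")
      case True thus ?thesis by (simp add: P_def)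
    next
      case False
      hence "c \<noteq> 0" using le by simp
      hence "(c - 1) * z < q" using Pc by (simp add: P_def)
      with \<open>(c' - 1) * z \<le> (c - 1) * z\<close> have "(c' - 1) * z < q" by (rule le_less_trans)
      thus ?thesis unfolding P_def by (rule disjI2)
    qed
  qed
  show ?thesis
  proof (intro exI[of _ NN] conjI allI impI)
    fix j assume j: "j < n"
    show "cover_thin n (NN j)" "dimvec (NN j) = (x, y)" using NN[OF j] unfolding Pr_def by auto
  next
    fix j l assume j: "j < n" and l: "l < n" and jl: "j \<noteq> l"
    show "\<not> kmod_iso n (NN j) (NN l)"
    proof
      assume iso: "kmod_iso n (NN j) (NN l)"
      have vj: "kmod_valid n (NN j)" and vl: "kmod_valid n (NN l)"
        using NN[OF j] NN[OF l] unfolding Pr_def cover_thin_def by auto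
      obtain t where t: "t < n" "(\<exists>c<n. rot n j c = t \<and> P c) \<noteq> (\<exists>c<n. rot n l c = t \<and> P c)"
        using comb[OF P0 Pn Pmono j l jl] by blast
      have "invp sd (NN j) t = invp sd (NN l) t" using invp_iso[OF iso vj vl t(1)] .
      moreover have "invp sd (NN j) t = (\<exists>c<n. rot n j c = t \<and> P c)" using NN[OF j] t(1) unfolding Pr_def by auto
      moreover have "invp sd (NN l) t = (\<exists>c<n. rot n l c = t \<and> P c)" using NN[OF l] t(1) unfolding Pr_def by auto
      ultimately show False using t(2) by simp
    qed
  qed
qed


end
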